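(* For every approval-based participatory budgeting instance $I=(N,\mathcal{T},B,\mathrm{cost},\mathcal{A})$ and every nonempty set of projects $T\subseteq\mathcal{T}$, the proportionality degree of the Method of Equal Shares satisfies \[ d_{\textsc{mes}}(T)\;\geq\;\frac{1}{2}\left(\frac{\mathrm{cost}(T)}{\max_{t\in T}\mathrm{cost}(t)}-1\right). \]
   Context: An approval-based PB instance is $I=(N,\mathcal{T},B,\mathrm{cost},\mathcal{A})$: $N$ is a set of $n$ voters, $\mathcal{T}$ a finite set of projects, $B>0$ a budget, $\mathrm{cost}:\mathcal{T}\to\mathbb{R}_{>0}$, with $\mathrm{cost}(S)=\sum_{t\in S}\mathrm{cost}(t)$, and $\mathcal{A}=(A_i)_{i\in N}$ with $A_i\subseteq\mathcal{T}$ the projects approved by voter $i$. A PB rule $f$ maps each instance to a set $W=f(I)\subseteq\mathcal{T}$ with $\mathrm{cost}(W)\le B$. For $T\subseteq\mathcal{T}$, a group $V\subseteq N$ is $T$-cohesive if $T\subseteq\bigcap_{i\in V}A_i$ and $\mathrm{cost}(T)/B\le |V|/n$; $\mathcal{V}(T)$ denotes the set of all $T$-cohesive groups. The average satisfaction of $V$ w.r.t. $W$ is $\mathrm{avg}_W(V)=\frac{1}{|V|}\sum_{i\in V}|W\cap A_i|$. The proportionality degree of $f$ for $T$ (on instance $I$) is $d_f(T)=\sup\{g:\ \min_{V\in\mathcal{V}(T)}\mathrm{avg}_{f(I)}(V)\ge \min(|T|,g)\}$. Method of Equal Shares (\textsc{mes}): each voter starts with budget $B/n$; start with $W=\emptyset$.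 Let $\ell_i$ denote voter $i$'s remaining budget ($B/n$ minus what $i$ has paid so far) and $N_t=\{i\in N: t\in A_i\}$. For $\rho\ge 0$, a project $t\in\mathcal{T}\setminus W$ is $\rho$-affordable if $\sum_{i\in N_t}\min(\ell_i,\rho)=\mathrm{cost}(t)$. If no project is $\rho$-affordable for any $\rho$, \textsc{mes} stops and returns $W$; otherwise it adds to $W$ a project that is $\rho$-affordable for the minimum possible $\rho$ (ties broken arbitrarily), each $i\in N_t$ paying $\min(\ell_i,\rho)$, and repeats. *)

theory Defs
  imports Complex_Main "HOL-Library.Extended_Real"
begin

definition pb_instance ::
  "'v set \<Rightarrow> 'p set \<Rightarrow> real \<Rightarrow> ('p \<Rightarrow> real) \<Rightarrow> ('v \<Rightarrow> 'p set) \<Rightarrow> bool" where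
  "pb_instance N P B cost A \<longleftrightarrow>
     finite N \<and> N \<noteq> {} \<and> finite P \<and> B > 0 \<and>
     (\<forall>t\<in>P. cost t > 0) \<and> (\<forall>i\<in>N. A i \<subseteq> P)"

definition setcost :: "('p \<Rightarrow> real) \<Rightarrow> 'p set \<Rightarrow> real" where
  "setcost cost S = (\<Sum>t\<in>S. cost t)"

definition supporters :: "'v set \<Rightarrow> ('v \<Rightarrow> 'p set) \<Rightarrow> 'p \<Rightarrow> 'v set" where
  "supporters N A t = {i\<in>N. t \<in> A i}"

definition cohesive :: "'v set \<Rightarrow> real \<Rightarrow> ('p \<Rightarrow> real) \<Rightarrow> ('v \<Rightarrow> 'p set)
    \<Rightarrow> 'p set \<Rightarrow> 'v set \<Rightarrow> bool" where
  "cohesive N B cost A T V \<longleftrightarrow>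
     V \<subseteq> N \<and> T \<subseteq> (\<Inter>i\<in>V. A i) \<and>
     setcost cost T / B \<le> real (card V) / real (card N)"

definition avg_sat :: "('v \<Rightarrow> 'p set) \<Rightarrow> 'p set \<Rightarrow> 'v set \<Rightarrow> real" where
  "avg_sat A W V = (\<Sum>i\<in>V. real (card (W \<inter> A i))) / real (card V)"

definition prop_degree :: "'v set \<Rightarrow> real \<Rightarrow> ('p \<Rightarrow> real) \<Rightarrow> ('v \<Rightarrow> 'p set)
    \<Rightarrow> 'p set \<Rightarrow> 'p set \<Rightarrow> ereal" where
  "prop_degree N B cost A W T =
     Sup {ereal g | g. \<forall>V. cohesive N B cost A T V \<longrightarrow>
                          avg_sat A W V \<ge> min (real (card T)) g}"

text \<open>Method of Equal Shares. A state is (W, l) with l i the remaining budget of voter i.\<close>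
definition affordable :: "'v set \<Rightarrow> ('p \<Rightarrow> real) \<Rightarrow> ('v \<Rightarrow> 'p set)
    \<Rightarrow> ('v \<Rightarrow> real) \<Rightarrow> real \<Rightarrow> 'p \<Rightarrow> bool" where
  "affordable N cost A l \<rho> t \<longleftrightarrow>
     \<rho> \<ge> 0 \<and> (\<Sum>i\<in>supporters N A t. min (l i) \<rho>) = cost t"

definition mes_step :: "'v set \<Rightarrow> 'p set \<Rightarrow> ('p \<Rightarrow> real) \<Rightarrow> ('v \<Rightarrow> 'p set)
    \<Rightarrow> 'p set \<times> ('v \<Rightarrow> real) \<Rightarrow> 'p set \<times> ('v \<Rightarrow> real) \<Rightarrow> bool" where
  "mes_step N P cost A s s' \<longleftrightarrow>
     (\<exists>t \<rho>. t \<in> P - fst s \<and> affordable N cost A (snd s) \<rho> t \<and>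
        (\<forall>t'\<in>P - fst s. \<forall>\<rho>'. affordable N cost A (snd s) \<rho>' t' \<longrightarrow> \<rho> \<le> \<rho>') \<and>
        s' = (insert t (fst s),
              (\<lambda>i. if i \<in> supporters N A t then snd s i - min (snd s i) \<rho> else snd s i)))"

definition mes_terminal :: "'v set \<Rightarrow> 'p set \<Rightarrow> ('p \<Rightarrow> real) \<Rightarrow> ('v \<Rightarrow> 'p set)
    \<Rightarrow> 'p set \<times> ('v \<Rightarrow> real) \<Rightarrow> bool" where
  "mes_terminal N P cost A s \<longleftrightarrow>
     \<not> (\<exists>t\<in>P - fst s. \<exists>\<rho>. affordable N cost A (snd s) \<rho> t)"

text \<open>W is a possible output of MES (for some tie-breaking).\<close>
definition mes_outcome :: "'v set \<Rightarrow> 'p set \<Rightarrow> real \<Rightarrow> ('p \<Rightarrow> real)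
    \<Rightarrow> ('v \<Rightarrow> 'p set) \<Rightarrow> 'p set \<Rightarrow> bool" where
  "mes_outcome N P B cost A W \<longleftrightarrow>
     (\<exists>l. (mes_step N P cost A)\<^sup>*\<^sup>* ({}, (\<lambda>i. B / real (card N))) (W, l) \<and>
          mes_terminal N P cost A (W, l))"

end

theory Submission
  imports Defs
begin

lemma ivt_afford:
  fixes l :: "'v \<Rightarrow> real"
  assumes "finite X" "\<forall>j\<in>X. l j \<ge> 0" "c \<ge> 0" "(\<Sum>j\<in>X. l j) \<ge> c"
  shows "\<exists>\<rho>\<ge>0. (\<Sum>j\<in>X. min (l j) \<rho>) = c"
proof -
  let ?R = "\<Sum>j\<in>X. l j"
  have f0: "(\<Sum>j\<in>X. min (l j) 0) = 0" using assms(2) by (intro sum.neutral) (simp add: min_absorb2)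
  have fR: "(\<Sum>j\<in>X. min (l j) ?R) = ?R"
  proof (rule sum.cong[OF refl])
    fix j assume "j \<in> X"
    then have "l j \<le> ?R" using assms(1,2) by (intro member_le_sum) auto
    then show "min (l j) ?R = l j" by simp
  qed
  have "continuous_on {0..?R} (\<lambda>\<rho>. \<Sum>j\<in>X. min (l j) \<rho>)"
    by (intro continuous_intros)
  then obtain x where "0 \<le> x" "x \<le> ?R" "(\<Sum>j\<in>X. min (l j) x) = c"
    using IVT'[of "\<lambda>\<rho>. \<Sum>j\<in>X. min (l j) \<rho>" 0 c ?R] f0 fR assms by auto
  then show ?thesis by blast
qed

lemma pair_bound:
  fixes li lj \<rho> :: real
  assumes "li \<ge> 0" "lj \<ge> 0" "\<rho> \<ge> 0"
    "li' = (if i then li - min li \<rho> else li)"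
    "lj' = (if j then lj - min lj \<rho> else lj)"
  shows "min li lj - min li' lj' \<le> (if i then min lj \<rho> else 0) + (if j \<and> \<not> i then min li \<rho> else 0)"
  using assms by (auto simp: min_def split: if_splits)

lemma key_step:
  fixes V K :: "'v set" and l l' :: "'v \<Rightarrow> real"
  assumes "finite V" "K \<subseteq> V" "\<forall>j\<in>V. l j \<ge> 0" "\<rho> \<ge> 0"
    "\<forall>j\<in>V. l' j = (if j \<in> K then l j - min (l j) \<rho> else l j)"
    "(\<Sum>j\<in>V. min (l j) \<rho>) \<le> c"
  shows "(\<Sum>j\<in>V. l j) - (\<Sum>j\<in>V. l' j) + (\<Sum>i\<in>V. \<Sum>j\<in>V. min (l i) (l j))
          - (\<Sum>i\<in>V. \<Sum>j\<in>V. min (l' i) (l' j)) \<le> 2 * real (card K) * c"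
proof -
  define m where "m j = min (l j) \<rho>" for j
  define M where "M = (\<Sum>j\<in>V. m j)"
  define k where "k = real (card K)"
  have fK: "finite K" using assms(1,2) finite_subset by blast
  have mnn: "\<forall>j\<in>V. m j \<ge> 0" using assms(3,4) by (simp add: m_def)
  have e1: "(\<Sum>j\<in>V. l j) - (\<Sum>j\<in>V. l' j) = (\<Sum>j\<in>K. m j)"
  proof -
    have "(\<Sum>j\<in>V. l j) - (\<Sum>j\<in>V. l' j) = (\<Sum>j\<in>V. l j - l' j)" by (simp add: sum_subtractf)
    also have "\<dots> = (\<Sum>j\<in>V. if j \<in> K then m j else 0)"
      using assms(5) by (intro sum.cong) (auto simp: m_def)
    also have "\<dots> = (\<Sum>j\<in>K. m j)"
      using assms(1,2) by (simp add: sum.If_cases Int_absorb1 Int_absorb2)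
    finally show ?thesis .
  qed
  have pb: "min (l i) (l j) - min (l' i) (l' j) \<le> (if i \<in> K then m j else 0) + (if j \<in> K \<and> i \<notin> K then m i else 0)"
    if "i \<in> V" "j \<in> V" for i j
    unfolding m_def
    by (rule pair_bound) (use that assms(3,4,5) in auto)
  have "(\<Sum>i\<in>V. \<Sum>j\<in>V. min (l i) (l j)) - (\<Sum>i\<in>V. \<Sum>j\<in>V. min (l' i) (l' j))
      = (\<Sum>i\<in>V. \<Sum>j\<in>V. min (l i) (l j) - min (l' i) (l' j))"
    by (simp add: sum_subtractf)
  also have "\<dots> \<le> (\<Sum>i\<in>V. \<Sum>j\<in>V. (if i \<in> K then m j else 0) + (if j \<in> K \<and> i \<notin> K then m i else 0))"
    using pb by (intro sum_mono) auto
  also have "\<dots> = (\<Sum>i\<in>V. (if i \<in> K then M else 0) + (if i \<notin> K then k * m i else 0))"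
  proof (intro sum.cong refl)
    fix i assume "i \<in> V"
    have "(\<Sum>j\<in>V. (if j \<in> K \<and> i \<notin> K then m i else 0)) = (if i \<notin> K then k * m i else 0)"
      using assms(1,2) by (auto simp: sum.If_cases Int_absorb1 Int_absorb2 k_def)
    then show "(\<Sum>j\<in>V. (if i \<in> K then m j else 0) + (if j \<in> K \<and> i \<notin> K then m i else 0)) =
         (if i \<in> K then M else 0) + (if i \<notin> K then k * m i else 0)"
      by (simp add: sum.distrib M_def)
  qed
  also have "\<dots> = k * M + k * (\<Sum>i\<in>V - K. m i)"
  proof -
    have hVK: "V \<inter> {i. i \<notin> K} = V - K" "V \<inter> {i. i \<in> K} = K" "V \<inter> - {i. i \<in> K} = V - K" "V \<inter> - {i. i \<notin> K} = K" "V \<inter> K = K" using assms(2) by auto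
    show ?thesis using assms(1,2) by (simp add: sum.distrib sum.If_cases hVK k_def sum_distrib_left)
  qed
  finally have g: "(\<Sum>i\<in>V. \<Sum>j\<in>V. min (l i) (l j)) - (\<Sum>i\<in>V. \<Sum>j\<in>V. min (l' i) (l' j)) \<le> k * M + k * (\<Sum>i\<in>V - K. m i)" .
  have split: "M = (\<Sum>i\<in>K. m i) + (\<Sum>i\<in>V - K. m i)"
    unfolding M_def using sum.subset_diff[OF assms(2,1), of m] by simp
  have sK: "(\<Sum>i\<in>K. m i) \<ge> 0" using mnn assms(2) by (intro sum_nonneg) auto
  have sK2: "(\<Sum>i\<in>K. m i) \<le> k * (\<Sum>i\<in>K. m i)"
  proof (cases "K = {}")
    case True then show ?thesis by simp
  next
    case False
    then have "k \<ge> 1" using fK by (simp add: k_def Suc_le_eq card_gt_0_iff)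
    then show ?thesis using sK by (metis mult_le_cancel_right1 not_le order_less_le_trans zero_less_one)
  qed
  have Mc: "M \<le> c" using assms(6) by (simp add: M_def m_def)
  have k0: "k \<ge> 0" by (simp add: k_def)
  have "k * M \<le> k * c" using Mc k0 by (simp add: mult_left_mono)
  moreover have "k * M = k * (\<Sum>i\<in>K. m i) + k * (\<Sum>i\<in>V - K. m i)" using split by (simp add: algebra_simps)
  ultimately have "(\<Sum>j\<in>V. l j) - (\<Sum>j\<in>V. l' j) + (\<Sum>i\<in>V. \<Sum>j\<in>V. min (l i) (l j))
          - (\<Sum>i\<in>V. \<Sum>j\<in>V. min (l' i) (l' j)) \<le> 2 * k * c" using e1 g split sK2 by linarith
  then show ?thesis by (simp add: k_def)
qed

lemma mes_basic:
  assumes "pb_instance N P B cost A"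
    "(mes_step N P cost A)\<^sup>*\<^sup>* ({}, (\<lambda>i. B / real (card N))) s"
  shows "fst s \<subseteq> P \<and> (\<forall>i. snd s i \<ge> 0)"
  using assms(2)
proof (induction rule: rtranclp_induct)
  case base
  then show ?case using assms(1) by (simp add: pb_instance_def)
next
  case (step y z)
  from step(2) obtain t \<rho> where t: "t \<in> P - fst y" "affordable N cost A (snd y) \<rho> t"
    "z = (insert t (fst y), (\<lambda>i. if i \<in> supporters N A t then snd y i - min (snd y i) \<rho> else snd y i))"
    unfolding mes_step_def by blast
  then show ?case using step(3) by (auto simp: affordable_def)
qed

definition phi :: "'v set \<Rightarrow> real \<Rightarrow> real \<Rightarrow> ('v \<Rightarrow> 'p set) \<Rightarrow> 'p set \<Rightarrow> ('v \<Rightarrow> real) \<Rightarrow> real" where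
  "phi V c b A W l = 2 * c * (\<Sum>i\<in>V. real (card (W \<inter> A i))) - (real (card V) * b - (\<Sum>i\<in>V. l i))
     - real (card V) ^ 2 * b + (\<Sum>i\<in>V. \<Sum>j\<in>V. min (l i) (l j))"

lemma not_afford_sum:
  assumes "pb_instance N P B cost A" "ts \<in> P" "\<forall>i. l i \<ge> 0"
    "\<not> (\<exists>\<rho>. affordable N cost A l \<rho> ts)"
  shows "(\<Sum>j\<in>supporters N A ts. l j) < cost ts"
proof (rule ccontr)
  assume "\<not> ?thesis"
  moreover have "finite (supporters N A ts)" using assms(1) by (simp add: pb_instance_def supporters_def)
  moreover have "cost ts \<ge> 0" using assms(1,2) by (auto simp: pb_instance_def less_imp_le)
  ultimately obtain \<rho> where "\<rho> \<ge> 0" "(\<Sum>j\<in>supporters N A ts. min (l j) \<rho>) = cost ts"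
    using ivt_afford[of "supporters N A ts" l "cost ts"] assms(3) by force
  then show False using assms(4) by (auto simp: affordable_def)
qed

lemma phi_step:
  assumes pb: "pb_instance N P B cost A" and WP: "W \<subseteq> P" and lnn: "\<forall>i. l i \<ge> 0"
    and VN: "V \<subseteq> N" and VA: "\<forall>i\<in>V. ts \<in> A i" and tsP: "ts \<in> P" and cts: "cost ts \<le> c"
    and st: "mes_step N P cost A (W, l) (W', l')" and tsW: "ts \<notin> W'"
  shows "phi V c b A W' l' \<ge> phi V c b A W l"
proof -
  from st obtain t \<rho> where t: "t \<in> P - W" "affordable N cost A l \<rho> t"
    "\<forall>t'\<in>P - W. \<forall>\<rho>'. affordable N cost A l \<rho>' t' \<longrightarrow> \<rho> \<le> \<rho>'"
    and W': "W' = insert t W" and l': "l' = (\<lambda>i. if i \<in> supporters N A t then l i - min (l i) \<rho> else l i)"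
    using st unfolding mes_step_def fst_conv snd_conv prod.inject by blast
  have rho: "\<rho> \<ge> 0" using t(2) by (simp add: affordable_def)
  have fN: "finite N" using pb by (simp add: pb_instance_def)
  have fV: "finite V" using VN fN finite_subset by blast
  have fP: "finite P" using pb by (simp add: pb_instance_def)
  have fW: "finite W" using WP fP finite_subset by blast
  have tsW0: "ts \<in> P - W" using tsW tsP W' by auto
  have fS: "finite (supporters N A ts)" using fN by (simp add: supporters_def)
  have VS: "V \<subseteq> supporters N A ts" using VN VA by (auto simp: supporters_def)
  define K where "K = {i\<in>V. t \<in> A i}"
  have KV: "K \<subseteq> V" by (auto simp: K_def)
  have Mc: "(\<Sum>j\<in>V. min (l j) \<rho>) \<le> c"
  proof (cases "\<exists>\<rho>'. affordable N cost A l \<rho>' ts")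
    case True
    then obtain \<rho>' where a: "affordable N cost A l \<rho>' ts" by blast
    then have "\<rho> \<le> \<rho>'" using t(3) tsW0 by blast
    then have "(\<Sum>j\<in>V. min (l j) \<rho>) \<le> (\<Sum>j\<in>V. min (l j) \<rho>')"
      by (intro sum_mono) auto
    also have "\<dots> \<le> (\<Sum>j\<in>supporters N A ts. min (l j) \<rho>')"
      using a lnn by (intro sum_mono2[OF fS VS]) (auto simp: affordable_def)
    also have "\<dots> = cost ts" using a by (simp add: affordable_def)
    finally show ?thesis using cts by linarith
  next
    case False
    have "(\<Sum>j\<in>V. min (l j) \<rho>) \<le> (\<Sum>j\<in>V. l j)" by (intro sum_mono) auto
    also have "\<dots> \<le> (\<Sum>j\<in>supporters N A ts. l j)"
      using lnn by (intro sum_mono2[OF fS VS]) auto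
    also have "\<dots> < cost ts" using not_afford_sum[OF pb tsP lnn False] .
    finally show ?thesis using cts by linarith
  qed
  have key: "(\<Sum>j\<in>V. l j) - (\<Sum>j\<in>V. l' j) + (\<Sum>i\<in>V. \<Sum>j\<in>V. min (l i) (l j))
          - (\<Sum>i\<in>V. \<Sum>j\<in>V. min (l' i) (l' j)) \<le> 2 * real (card K) * c"
    by (rule key_step[OF fV KV _ rho _ Mc]) (use lnn VN in \<open>auto simp: l' K_def supporters_def\<close>)
  have card: "(\<Sum>i\<in>V. real (card (W' \<inter> A i))) = (\<Sum>i\<in>V. real (card (W \<inter> A i))) + real (card K)"
  proof -
    have "(\<Sum>i\<in>V. real (card (W' \<inter> A i))) = (\<Sum>i\<in>V. real (card (W \<inter> A i)) + (if t \<in> A i then 1 else 0))"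
    proof (intro sum.cong refl)
      fix i assume "i \<in> V"
      show "real (card (W' \<inter> A i)) = real (card (W \<inter> A i)) + (if t \<in> A i then 1 else 0)"
        using t(1) fW by (auto simp: W' Int_insert_left)
    qed
    also have "\<dots> = (\<Sum>i\<in>V. real (card (W \<inter> A i))) + real (card K)"
      using fV by (simp add: sum.distrib K_def sum.If_cases Int_def)
    finally show ?thesis .
  qed
  show ?thesis using key card unfolding phi_def by (simp add: algebra_simps)
qed

lemma phi_inv:
  assumes pb: "pb_instance N P B cost A"
    and VN: "V \<subseteq> N" and VA: "\<forall>i\<in>V. ts \<in> A i" and tsP: "ts \<in> P" and cts: "cost ts \<le> c"
    and run: "(mes_step N P cost A)\<^sup>*\<^sup>* ({}, (\<lambda>i. B / real (card N))) s"
  shows "ts \<notin> fst s \<longrightarrow> phi V c (B / real (card N)) A (fst s) (snd s) \<ge> 0"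
  using run
proof (induction rule: rtranclp_induct)
  case base
  have "(\<Sum>i\<in>V. \<Sum>j\<in>V. min x x) = real (card V) ^ 2 * x" for x :: real
    by (simp add: power2_eq_square)
  then show ?case unfolding phi_def by (simp add: power2_eq_square)
next
  case (step y z)
  obtain W l where y: "y = (W, l)" by (cases y)
  obtain W' l' where z: "z = (W', l')" by (cases z)
  have bas: "W \<subseteq> P \<and> (\<forall>i. l i \<ge> 0)" using mes_basic[OF pb step(1)] y by simp
  show ?case
  proof
    assume "ts \<notin> fst z"
    then have tsW': "ts \<notin> W'" using z by simp
    have "W \<subseteq> W'" using step(2) unfolding y z mes_step_def by auto
    then have "ts \<notin> W" using tsW' by auto
    then have "phi V c (B / real (card N)) A W l \<ge> 0" using step(3) y by simp
    moreover have "phi V c (B / real (card N)) A W' l' \<ge> phi V c (B / real (card N)) A W l"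
      using phi_step[OF pb _ _ VN VA tsP cts _ tsW'] bas step(2) y z by auto
    ultimately show "phi V c (B / real (card N)) A (fst z) (snd z) \<ge> 0" using z by simp
  qed
qed

lemma final_arith:
  fixes c v b L U cT :: real
  assumes "c > 0" "v > 0" "2 * c * U \<ge> (v + 1) * (v * b - L)" "L < c" "cT \<le> v * b" "U \<ge> 0"
  shows "U / v \<ge> (1/2) * (cT / c - 1)"
proof (cases "cT \<le> c")
  case True
  then have "cT / c \<le> 1" using assms(1) by simp
  then have "(1/2) * (cT / c - 1) \<le> 0" by simp
  moreover have "U / v \<ge> 0" using assms(2,6) by simp
  ultimately show ?thesis by linarith
next
  case False
  have "v * b - L \<ge> cT - c" using assms(4,5) by linarith
  then have "(v + 1) * (v * b - L) \<ge> (v + 1) * (cT - c)" using assms(2) by (intro mult_left_mono) auto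
  moreover have "(v + 1) * (cT - c) \<ge> v * (cT - c)" using False by (simp add: algebra_simps)
  ultimately have "2 * c * U \<ge> v * (cT - c)" using assms(3) by linarith
  then show ?thesis using assms(1,2) by (simp add: field_simps)
qed

theorem theorem1:
  fixes N :: "'v set" and P :: "'p set" and B :: real and cost :: "'p \<Rightarrow> real"
    and A :: "'v \<Rightarrow> 'p set" and T W :: "'p set"
  assumes "pb_instance N P B cost A"
    and "T \<subseteq> P" and "T \<noteq> {}"
    and "mes_outcome N P B cost A W"
  shows "prop_degree N B cost A W T \<ge>
           ereal ((1/2) * (setcost cost T / Max (cost ` T) - 1))"
proof -
  note pb = assms(1)
  define g0 where "g0 = (1/2) * (setcost cost T / Max (cost ` T) - 1)"
  define b where "b = B / real (card N)"
  obtain l where run: "(mes_step N P cost A)\<^sup>*\<^sup>* ({}, (\<lambda>i. b)) (W, l)"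
    and trm: "mes_terminal N P cost A (W, l)"
    using assms(4) unfolding mes_outcome_def b_def by blast
  have bas: "W \<subseteq> P" "\<forall>i. l i \<ge> 0" using mes_basic[OF pb run[unfolded b_def]] by auto
  have fN: "finite N" and Nne: "N \<noteq> {}" and Bpos: "B > 0" and fP: "finite P"
    and cpos: "\<forall>t\<in>P. cost t > 0" and AP: "\<forall>i\<in>N. A i \<subseteq> P"
    using pb by (auto simp: pb_instance_def)
  have fT: "finite T" using assms(2) fP finite_subset by blast
  have fW: "finite W" using bas(1) fP finite_subset by blast
  have cTpos: "setcost cost T > 0" unfolding setcost_def
    using fT assms(2,3) cpos by (intro sum_pos) auto
  have nposr: "real (card N) > 0" using fN Nne by (simp add: card_gt_0_iff)
  have main: "avg_sat A W V \<ge> min (real (card T)) g0" if coh: "cohesive N B cost A T V" for V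
  proof -
    have VN: "V \<subseteq> N" and TA: "T \<subseteq> (\<Inter>i\<in>V. A i)"
      and cr: "setcost cost T / B \<le> real (card V) / real (card N)"
      using coh by (auto simp: cohesive_def)
    have fV: "finite V" using VN fN finite_subset by blast
    have "setcost cost T / B > 0" using cTpos Bpos by simp
    then have vpos: "real (card V) > 0" using cr nposr
      by (metis divide_le_0_iff of_nat_0_le_iff order.strict_trans1 not_le)
    have cTvb: "setcost cost T \<le> real (card V) * b"
      using cr Bpos nposr unfolding b_def by (simp add: field_simps)
    define U where "U = (\<Sum>i\<in>V. real (card (W \<inter> A i)))"
    have avg: "avg_sat A W V = U / real (card V)" by (simp add: avg_sat_def U_def)
    show ?thesis
    proof (cases "T \<subseteq> W")
      case True
      have "U \<ge> (\<Sum>i\<in>V. real (card T))"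
        unfolding U_def
      proof (intro sum_mono)
        fix i assume "i \<in> V"
        then have "T \<subseteq> W \<inter> A i" using True TA by auto
        then show "real (card T) \<le> real (card (W \<inter> A i))" using fW by (simp add: card_mono)
      qed
      then have "U \<ge> real (card V) * real (card T)" by simp
      then have "U / real (card V) \<ge> real (card T)" using vpos by (simp add: field_simps)
      then show ?thesis using avg by simp
    next
      case False
      then obtain ts where ts: "ts \<in> T" "ts \<notin> W" by blast
      define c where "c = Max (cost ` T)"
      have cts: "cost ts \<le> c" unfolding c_def using fT ts(1) by simp
      have tsP: "ts \<in> P" using ts assms(2) by auto
      have cpos': "c > 0" using cts cpos tsP by fastforce
      have VA: "\<forall>i\<in>V. ts \<in> A i" using TA ts by auto
      have phi0: "phi V c b A W l \<ge> 0"
        using phi_inv[OF pb VN VA tsP cts run[unfolded b_def]] ts(2) by (simp add: b_def)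
      have VS: "V \<subseteq> supporters N A ts" using VN VA by (auto simp: supporters_def)
      have fS: "finite (supporters N A ts)" using fN by (simp add: supporters_def)
      have na: "\<not> (\<exists>\<rho>. affordable N cost A l \<rho> ts)" using trm ts tsP by (auto simp: mes_terminal_def)
      have "(\<Sum>j\<in>V. l j) \<le> (\<Sum>j\<in>supporters N A ts. l j)"
        using bas(2) by (intro sum_mono2[OF fS VS]) auto
      also have "\<dots> < cost ts" using not_afford_sum[OF pb tsP bas(2) na] .
      finally have Lc: "(\<Sum>j\<in>V. l j) < c" using cts by linarith
      have G: "(\<Sum>i\<in>V. \<Sum>j\<in>V. min (l i) (l j)) \<le> real (card V) * (\<Sum>i\<in>V. l i)"
      proof -
        have "(\<Sum>i\<in>V. \<Sum>j\<in>V. min (l i) (l j)) \<le> (\<Sum>i\<in>V. \<Sum>j\<in>V. l i)"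
          by (intro sum_mono) auto
        also have "\<dots> = real (card V) * (\<Sum>i\<in>V. l i)" by (simp add: sum_distrib_left)
        finally show ?thesis .
      qed
      have "2 * c * U \<ge> (real (card V) + 1) * (real (card V) * b - (\<Sum>i\<in>V. l i))"
        using phi0 G unfolding phi_def U_def by (simp add: algebra_simps power2_eq_square)
      moreover have "U \<ge> 0" unfolding U_def by (intro sum_nonneg) auto
      ultimately have "U / real (card V) \<ge> g0"
        unfolding g0_def c_def[symmetric]
        using final_arith[OF cpos' vpos _ Lc cTvb] by blast
      then show ?thesis using avg by simp
    qed
  qed
  have "ereal g0 \<in> {ereal g | g. \<forall>V. cohesive N B cost A T V \<longrightarrow>
                          avg_sat A W V \<ge> min (real (card T)) g}"
    using main by blast
  then have "ereal g0 \<le> prop_degree N B cost A W T"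
    unfolding prop_degree_def by (rule Sup_upper)
  then show ?thesis by (simp add: g0_def)
qed

end
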